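(* Let $\gamma$ be a regularly varying function near $0$ with index $\alpha\in(0,1]$. Then there exist constants $\mathsf{c}>0$ and $x_0\in(0,1)$ such that $$\int_0^{1/2}\gamma(xy)\frac{dy}{y\sqrt{\log(1/y)}}\le \mathsf{c}\,\gamma(x)\quad\text{for all }x\in[0,x_0].$$
   Context: $\gamma$ is a continuous increasing function near $0$ with $\lim_{x\downarrow0}\gamma(x)=0$. $\gamma$ is regularly varying near $0$ with index $\alpha$ if $\gamma(x)=x^\alpha L(x)$ for all $x\in(0,x_0)$ for some $x_0>0$, where $L:(0,x_0)\to[0,\infty)$ is slowly varying at $0$ in the sense of Karamata, i.e. $L(\lambda x)/L(x)\to1$ as $x\downarrow0$ for every $\lambda>0$. *)

theory Defs
  imports "HOL-Analysis.Analysis"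
begin

definition admissible_gauge :: "(real \<Rightarrow> real) \<Rightarrow> bool" where
  "admissible_gauge \<gamma> \<longleftrightarrow>
     (\<exists>\<delta>>0. continuous_on {0<..<\<delta>} \<gamma> \<and> mono_on {0<..<\<delta>} \<gamma>)
     \<and> (\<gamma> \<longlongrightarrow> 0) (at_right 0) \<and> \<gamma> 0 = 0"

definition slowly_varying_at0 :: "real \<Rightarrow> (real \<Rightarrow> real) \<Rightarrow> bool" where
  "slowly_varying_at0 x0 L \<longleftrightarrow>
     (\<forall>x\<in>{0<..<x0}. L x \<ge> 0) \<and>
     (\<forall>t>0. ((\<lambda>x. L (t * x) / L x) \<longlongrightarrow> 1) (at_right 0))"

definition regularly_varying_at0 :: "(real \<Rightarrow> real) \<Rightarrow> real \<Rightarrow> bool" where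
  "regularly_varying_at0 \<gamma> \<alpha> \<longleftrightarrow>
     (\<exists>x0>0. \<exists>L. slowly_varying_at0 x0 L \<and>
        (\<forall>x\<in>{0<..<x0}. \<gamma> x = x powr \<alpha> * L x))"

end

theory Submission
  imports Defs
begin

lemma ennreal_le_suminf: "(f::nat\<Rightarrow>ennreal) n \<le> suminf f"
  using sum_le_suminf[of f "{n}"] by (simp add: summableI)

lemma ex_dyadic:
  fixes y :: real assumes "0 < y" "y < 1/2"
  shows "\<exists>n. (1/2)^(n+2) < y \<and> y \<le> (1/2)^(n+1)"
proof -
  obtain k where k: "(1/2::real)^k < y" using real_arch_pow_inv[of y "1/2"] assms by auto
  define n where "n = (LEAST n. (1/2::real)^(n+2) < y)"
  have P: "(1/2::real)^(n+2) < y" unfolding n_def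
    by (rule LeastI[of _ k]) (rule le_less_trans[OF _ k], simp add: power_decreasing)
  show ?thesis
  proof (cases n)
    case 0 then show ?thesis using P assms by (intro exI[of _ n]) auto
  next
    case (Suc m)
    have "\<not> (1/2::real)^(m+2) < y" using Suc unfolding n_def
      by (metis Suc n_def lessI not_less_Least)
    then show ?thesis using P Suc by (intro exI[of _ n]) (auto simp: not_less)
  qed
qed

theorem proposition2p8:
  fixes \<gamma> :: "real \<Rightarrow> real" and \<alpha> :: real
  assumes "admissible_gauge \<gamma>"
    and "regularly_varying_at0 \<gamma> \<alpha>"
    and "0 < \<alpha>" and "\<alpha> \<le> 1"
  shows "\<exists>c>0. \<exists>x0\<in>{0<..<1}. \<forall>x\<in>{0..x0}.
     (\<integral>\<^sup>+ y. ennreal (\<gamma> (x * y) / (y * sqrt (ln (1 / y))))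
                * indicator {0<..<1/2} y \<partial>lborel)
       \<le> ennreal (c * \<gamma> x)"
proof -
  obtain \<delta> where d: "\<delta> > 0" "mono_on {0<..<\<delta>} \<gamma>" and g0: "\<gamma> 0 = 0"
    using assms(1) unfolding admissible_gauge_def by blast
  obtain xL L where xL: "xL > 0" and Lnn: "\<forall>x\<in>{0<..<xL}. L x \<ge> 0"
    and Llim: "((\<lambda>x. L ((1/2) * x) / L x) \<longlongrightarrow> 1) (at_right 0)"
    and gL: "\<forall>x\<in>{0<..<xL}. \<gamma> x = x powr \<alpha> * L x"
  proof -
    obtain xL L where "xL > 0" "\<forall>x\<in>{0<..<xL}. L x \<ge> 0"
      "\<forall>t>0. ((\<lambda>x. L (t * x) / L x) \<longlongrightarrow> 1) (at_right 0)"
      "\<forall>x\<in>{0<..<xL}. \<gamma> x = x powr \<alpha> * L x"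
      using assms(2) unfolding regularly_varying_at0_def slowly_varying_at0_def by blast
    moreover have "((\<lambda>x. L ((1/2) * x) / L x) \<longlongrightarrow> 1) (at_right 0)"
      using calculation(3)[rule_format, of "1/2"] by (simp only: zero_less_divide_iff zero_less_one zero_less_numeral simp_thms)
    ultimately show ?thesis using that by blast
  qed
  define q where "q = (2 powr \<alpha> + 1) / 2"
  define \<rho> where "\<rho> = (1/2) powr \<alpha> * q"
  have two: "2 powr \<alpha> > 1" using assms(3) by simp
  have half: "(1/2::real) powr \<alpha> * 2 powr \<alpha> = 1"
    by (simp add: powr_mult[symmetric])
  have q1: "1 < q" using two unfolding q_def by simp
  have hpos: "(1/2::real) powr \<alpha> > 0" by simp
  have hlt: "(1/2::real) powr \<alpha> < 1" using assms(3) by (simp add: powr_divide)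
  have \<rho>eq: "\<rho> = (1 + (1/2) powr \<alpha>) / 2" unfolding \<rho>_def q_def using half
    by (simp add: field_simps)
  have \<rho>pos: "\<rho> > 0" unfolding \<rho>eq by (simp add: add_pos_nonneg)
  have \<rho>1: "\<rho> < 1" unfolding \<rho>eq using hlt by simp
  have ev: "eventually (\<lambda>x. 1/2 < L ((1/2) * x) / L x \<and> L ((1/2) * x) / L x < q) (at_right 0)"
    using order_tendstoD(1)[OF Llim, of "1/2"] order_tendstoD(2)[OF Llim q1]
    by (auto elim: eventually_elim2)
  then obtain b where b: "b > 0" "\<And>x. 0 < x \<Longrightarrow> x < b \<Longrightarrow>
      1/2 < L ((1/2) * x) / L x \<and> L ((1/2) * x) / L x < q"
    by (auto simp: eventually_at_right_field)
  define x0 where "x0 = min (1/2) (min (b/2) (min (xL/2) (\<delta>/2)))"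
  have x0: "0 < x0" "x0 < 1" "x0 < b" "x0 < xL" "x0 < \<delta>"
    unfolding x0_def using b d xL by auto
  have gnn: "\<gamma> z \<ge> 0" if "0 < z" "z \<le> x0" for z
    using gL Lnn that x0 by auto
  have step: "\<gamma> ((1/2) * z) \<le> \<rho> * \<gamma> z" if z: "0 < z" "z \<le> x0" for z
  proof -
    have r: "1/2 < L ((1/2) * z) / L z" "L ((1/2) * z) / L z < q" using b(2)[of z] z x0 by auto
    have "L z \<noteq> 0" using r(1) by auto
    then have Lz: "L z > 0" using Lnn z x0 by force
    have Lh: "L ((1/2) * z) \<le> q * L z" using r(2) Lz by (simp add: divide_less_eq)
    have "\<gamma> ((1/2) * z) = ((1/2) * z) powr \<alpha> * L ((1/2) * z)" using gL z x0 by auto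
    also have "\<dots> = (1/2) powr \<alpha> * z powr \<alpha> * L ((1/2) * z)" using powr_mult[of "1/2" z \<alpha>] z by simp
    also have "\<dots> \<le> (1/2) powr \<alpha> * z powr \<alpha> * (q * L z)"
      by (intro mult_left_mono Lh) auto
    also have "\<dots> = \<rho> * \<gamma> z" using gL z x0 unfolding \<rho>_def by auto
    finally show ?thesis .
  qed
  have iter: "\<gamma> ((1/2)^k * z) \<le> \<rho>^k * \<gamma> z" if z: "0 < z" "z \<le> x0" for z k
  proof (induction k)
    case 0 then show ?case by simp
  next
    case (Suc k)
    have pk: "(1/2::real)^k \<le> 1" by (simp add: power_le_one)
    have "(1/2::real)^k * z \<le> 1 * z" using pk z by (intro mult_right_mono) auto
    then have a: "0 < (1/2::real)^k * z" "(1/2::real)^k * z \<le> x0"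
      using z by (simp, linarith)
    have "\<gamma> ((1/2)^Suc k * z) = \<gamma> ((1/2) * ((1/2)^k * z))" by (simp add: mult.assoc)
    also have "\<dots> \<le> \<rho> * \<gamma> ((1/2)^k * z)" using step[OF a] .
    also have "\<dots> \<le> \<rho> * (\<rho>^k * \<gamma> z)" using Suc \<rho>pos by simp
    finally show ?case by simp
  qed
  define c where "c = 1 / ((1 - \<rho>) * sqrt (ln 2))"
  have cpos: "c > 0" unfolding c_def using \<rho>1 by simp
  show ?thesis
  proof (intro exI[of _ c] conjI cpos bexI[of _ x0] ballI)
    show "x0 \<in> {0<..<1}" using x0 by auto
    fix x assume "x \<in> {0..x0}"
    then have x: "0 \<le> x" "x \<le> x0" by auto
    show "(\<integral>\<^sup>+ y. ennreal (\<gamma> (x * y) / (y * sqrt (ln (1 / y))))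
                * indicator {0<..<1/2} y \<partial>lborel) \<le> ennreal (c * \<gamma> x)"
    proof (cases "x = 0")
      case True
      then show ?thesis using g0 by simp
    next
      case False
      then have xp: "x > 0" using x by simp
      have gx: "\<gamma> x \<ge> 0" using gnn xp x by simp
      define a where "a n = \<rho>^n * \<gamma> x * 2^(n+2) / sqrt (ln 2)" for n :: nat
      define I where "I n = {(1/2::real)^(n+2)<..(1/2)^(n+1)}" for n :: nat
      have pw: "ennreal (\<gamma> (x * y) / (y * sqrt (ln (1 / y)))) * indicator {0<..<1/2} y
          \<le> (\<Sum>n. ennreal (a n) * indicator (I n) y)" for y
      proof (cases "y \<in> {0<..<1/2}")
        case False then show ?thesis by simp
      next
        case True
        then have y: "0 < y" "y < 1/2" by auto
        obtain n where n: "(1/2)^(n+2) < y" "y \<le> (1/2)^(n+1)" using ex_dyadic[OF y] by blast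
        have yI: "y \<in> I n" using n unfolding I_def by auto
        have xy: "0 < x * y" "x * y \<le> (1/2)^(n+1) * x" using xp y n by (auto simp: mult.commute)
        have pk: "(1/2::real)^(n+1) \<le> 1" by (rule power_le_one) auto
        have "(1/2::real)^(n+1) * x \<le> 1 * x" using pk xp by (intro mult_right_mono) auto
        then have hx: "(1/2::real)^(n+1) * x < \<delta>" using x x0 by linarith
        have "\<gamma> (x * y) \<le> \<gamma> ((1/2)^(n+1) * x)"
          using xy hx by (intro mono_onD[OF d(2)]) auto
        also have "\<dots> \<le> \<rho>^(n+1) * \<gamma> x" using iter xp x by blast
        also have "\<dots> \<le> \<rho>^n * \<gamma> x" using \<rho>pos \<rho>1 gx
          by (intro mult_right_mono) (auto intro: power_decreasing)
        finally have g1: "\<gamma> (x * y) \<le> \<rho>^n * \<gamma> x" .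
        have "x * y \<le> x * 1" using xp y by (intro mult_left_mono) auto
        then have g1': "0 \<le> \<gamma> (x * y)" using gnn xy x by simp
        have iy: "1 / y < 2^(n+2)" using n(1) y
          by (simp add: divide_less_eq power_one_over mult.commute)
        have ly: "ln 2 \<le> ln (1 / y)" using y by (simp add: le_divide_eq)
        have sq: "sqrt (ln 2) \<le> sqrt (ln (1/y))" using ly by simp
        have sqp: "sqrt (ln 2) > 0" by simp
        have "\<gamma> (x * y) / (y * sqrt (ln (1 / y))) = \<gamma> (x * y) * (1/y) * (1 / sqrt (ln (1/y)))"
          by simp
        also have "\<dots> \<le> (\<rho>^n * \<gamma> x) * 2^(n+2) * (1 / sqrt (ln 2))"
          using g1 g1' iy y sq sqp
          by (intro mult_mono frac_le) auto
        also have "\<dots> = a n" unfolding a_def by simp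
        finally have "\<gamma> (x * y) / (y * sqrt (ln (1 / y))) \<le> a n" .
        then have "ennreal (\<gamma> (x * y) / (y * sqrt (ln (1 / y)))) * indicator {0<..<1/2} y
            \<le> ennreal (a n) * indicator (I n) y" using True yI by (simp add: ennreal_leI)
        also have "\<dots> \<le> (\<Sum>n. ennreal (a n) * indicator (I n) y)" by (rule ennreal_le_suminf)
        finally show ?thesis .
      qed
      have "(\<integral>\<^sup>+ y. ennreal (\<gamma> (x * y) / (y * sqrt (ln (1 / y))))
                * indicator {0<..<1/2} y \<partial>lborel)
          \<le> (\<integral>\<^sup>+ y. (\<Sum>n. ennreal (a n) * indicator (I n) y) \<partial>lborel)"
        by (intro nn_integral_mono pw)
      also have "\<dots> = (\<Sum>n. \<integral>\<^sup>+ y. ennreal (a n) * indicator (I n) y \<partial>lborel)"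
        by (rule nn_integral_suminf) (auto simp: I_def)
      also have "\<dots> = (\<Sum>n. ennreal (\<rho>^n * (\<gamma> x / sqrt (ln 2))))"
      proof (rule suminf_cong)
        fix n
        have "(\<integral>\<^sup>+ y. ennreal (a n) * indicator (I n) y \<partial>lborel) = ennreal (a n) * emeasure lborel (I n)"
          by (rule nn_integral_cmult_indicator) (auto simp: I_def)
        also have "\<dots> = ennreal (a n) * ennreal ((1/2)^(n+1) - (1/2)^(n+2))"
          unfolding I_def by (subst emeasure_lborel_Ioc) (auto simp: power_decreasing)
        also have "\<dots> = ennreal (a n * ((1/2)^(n+1) - (1/2)^(n+2)))"
          by (rule ennreal_mult''[symmetric]) (auto simp: power_decreasing)
        also have "a n * ((1/2)^(n+1) - (1/2)^(n+2)) = \<rho>^n * (\<gamma> x / sqrt (ln 2))"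
          unfolding a_def by (simp add: field_simps power_one_over)
        finally show "(\<integral>\<^sup>+ y. ennreal (a n) * indicator (I n) y \<partial>lborel) = ennreal (\<rho>^n * (\<gamma> x / sqrt (ln 2)))" .
      qed
      also have "\<dots> = ennreal ((1 / (1 - \<rho>)) * (\<gamma> x / sqrt (ln 2)))"
      proof (rule suminf_ennreal_eq)
        show "(\<lambda>n. \<rho>^n * (\<gamma> x / sqrt (ln 2))) sums ((1 / (1 - \<rho>)) * (\<gamma> x / sqrt (ln 2)))"
          by (rule sums_mult2[OF geometric_sums]) (use \<rho>pos \<rho>1 in auto)
        show "\<And>n. 0 \<le> \<rho>^n * (\<gamma> x / sqrt (ln 2))" using gx \<rho>pos by simp
      qed
      also have "(1 / (1 - \<rho>)) * (\<gamma> x / sqrt (ln 2)) = c * \<gamma> x" unfolding c_def by simp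
      finally show ?thesis .
    qed
  qed
qed

end
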